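(* Let $q\ge2$ and $a_1,\dots,a_q\in\,]0,\infty[$ such that not all $a_i$ are equal, and let $a=\mathrm{diag}(a_1,\dots,a_q)$. Then the functions $f_r:U(q,\mathbb F)\to\mathbb R$, $f_r(k)=\ln\Delta_r(k^*ak)$, $r=1,\dots,q-1$, together with the constant function $1$, are linearly independent over $\mathbb R$.
   Context: $\mathbb F\in\{\mathbb R,\mathbb C,\mathbb H\}$. $\Delta_r(x)$ is the $r$-th leading principal minor of a Hermitian matrix $x$ (Dieudonné determinant $\det A=(\det_{\mathbb C}A)^{1/2}$ for $\mathbb H$). *)

theory Defs
  imports "HOL-Analysis.Analysis" "Jordan_Normal_Form.Determinant"
begin

text \<open>All matrices over F are represented as
complex matrices: real/complex q x q matrices directly, and a quaternionic q x q matrix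
Z + W j (Z, W complex) by its standard complex 2q x 2q representation, in which the
quaternion entry z + w j at position (i,j) becomes the 2 x 2 block
[[z, w], [-cnj w, cnj z]] at rows 2i,2i+1 and columns 2j,2j+1.  This representation is
an injective real-algebra homomorphism compatible with the conjugate transpose.\<close>

datatype base_field = FR | FC | FH

definition fdim :: "base_field \<Rightarrow> nat" where
  "fdim F = (if F = FH then 2 else 1)"

definition F_mat :: "base_field \<Rightarrow> nat \<Rightarrow> complex mat \<Rightarrow> bool" where
  "F_mat F q M \<longleftrightarrow> M \<in> carrier_mat (fdim F * q) (fdim F * q) \<and>
     (F = FR \<longrightarrow> (\<forall>i<q. \<forall>j<q. Im (M $$ (i,j)) = 0)) \<and>
     (F = FH \<longrightarrow> (\<forall>i<q. \<forall>j<q.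
         M $$ (2*i+1, 2*j+1) = cnj (M $$ (2*i, 2*j)) \<and>
         M $$ (2*i+1, 2*j) = - cnj (M $$ (2*i, 2*j+1))))"

definition adj :: "complex mat \<Rightarrow> complex mat" where
  "adj A = mat (dim_col A) (dim_row A) (\<lambda>(i,j). cnj (A $$ (j,i)))"

definition unitary_grp :: "base_field \<Rightarrow> nat \<Rightarrow> complex mat set" where
  "unitary_grp F q = {k. F_mat F q k \<and> adj k * k = 1\<^sub>m (fdim F * q)}"

definition diag_F :: "base_field \<Rightarrow> nat \<Rightarrow> (nat \<Rightarrow> real) \<Rightarrow> complex mat" where
  "diag_F F q a = mat (fdim F * q) (fdim F * q)
     (\<lambda>(i,j). if i = j then complex_of_real (a (i div fdim F)) else 0)"

definition leading_block :: "nat \<Rightarrow> complex mat \<Rightarrow> complex mat" where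
  "leading_block n x = mat n n (\<lambda>(i,j). x $$ (i,j))"

text \<open>r-th leading principal minor of a Hermitian matrix over F; for H the Dieudonne
determinant (det_C)^(1/2) of the complex representation.\<close>
definition minor_F :: "base_field \<Rightarrow> nat \<Rightarrow> complex mat \<Rightarrow> real" where
  "minor_F F r x = (if F = FH then sqrt (Re (det (leading_block (2*r) x)))
                    else Re (det (leading_block r x)))"

definition f_F :: "base_field \<Rightarrow> nat \<Rightarrow> (nat \<Rightarrow> real) \<Rightarrow> nat \<Rightarrow> complex mat \<Rightarrow> real" where
  "f_F F q a r k = ln (minor_F F r (adj k * diag_F F q a * k))"

end

theory Submission
  imports Defs
begin

definition tau :: "nat \<Rightarrow> (nat \<Rightarrow> nat) \<Rightarrow> nat \<Rightarrow> nat" where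
  "tau d s j = d * s (j div d) + j mod d"

definition permk :: "base_field \<Rightarrow> nat \<Rightarrow> (nat \<Rightarrow> nat) \<Rightarrow> complex mat" where
  "permk F q s = mat (fdim F * q) (fdim F * q) (\<lambda>(i,j). if i = tau (fdim F) s j then 1 else 0)"

lemma cnj_ind: "cnj (if P then 1 else 0) = (if P then 1 else 0)" by simp

lemma fdim_pos: "fdim F > 0" by (simp add: fdim_def)

lemma tau_div: "d > 0 \<Longrightarrow> tau d s j div d = s (j div d)" by (simp add: tau_def)

lemma tau_lt: assumes "\<forall>i<q. s i < q" "d > 0" "j < d*q" shows "tau d s j < d*q"
proof -
  have "j div d < q" using assms by (simp add: less_mult_imp_div_less mult.commute)
  then have "s (j div d) < q" using assms by auto
  then have "s (j div d) + 1 \<le> q" by simp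
  then have "d * (s (j div d) + 1) \<le> d*q" by (rule mult_le_mono2)
  moreover have "j mod d < d" using assms by simp
  ultimately show ?thesis unfolding tau_def by (simp add: algebra_simps)
qed

lemma tau_inj: assumes "inj_on s {..<q}" "d > 0" "j < d*q" "j' < d*q" "tau d s j = tau d s j'"
  shows "j = j'"
proof -
  have jq: "j div d < q" "j' div d < q" using assms by (simp_all add: less_mult_imp_div_less mult.commute)
  have "tau d s j div d = s (j div d)" "tau d s j mod d = j mod d"
       "tau d s j' div d = s (j' div d)" "tau d s j' mod d = j' mod d"
    using assms(2) by (simp_all add: tau_def)
  then have "s (j div d) = s (j' div d)" "j mod d = j' mod d" using assms(5) by metis+
  then have "j div d = j' div d" using assms(1) jq by (meson inj_onD lessThan_iff)
  then show ?thesis using \<open>j mod d = j' mod d\<close> by (metis div_mult_mod_eq)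
qed

lemma conj_diag:
  assumes "\<forall>i<q. s i < q" "inj_on s {..<q}" "d > 0"
  and k: "k = mat (d*q) (d*q) (\<lambda>(i,j). if i = tau d s j then 1 else 0)"
  shows "adj k * mat (d*q) (d*q) (\<lambda>(i,j). if i = j then w i else 0) * k
       = mat (d*q) (d*q) (\<lambda>(j,j'). if j = j' then w (tau d s j) else 0)"
  (is "?L = ?R")
proof (rule eq_matI)
  have dims: "dim_row ?L = d*q" "dim_col ?L = d*q" using k by (simp_all add: adj_def)
  then show "dim_row ?L = dim_row ?R" "dim_col ?L = dim_col ?R" by simp_all
  fix j j' assume j: "j < dim_row ?R" "j' < dim_col ?R"
  then have jj: "j < d*q" "j' < d*q" by simp_all
  have tl: "tau d s j < d*q" "tau d s j' < d*q" using tau_lt[OF assms(1,3)] jj by auto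
  have A: "(adj k * mat (d*q) (d*q) (\<lambda>(i,j). if i = j then w i else 0)) $$ (j,l) =
      (if tau d s j = l then w l else 0)" if l: "l < d*q" for l
  proof -
    have "(adj k * mat (d*q) (d*q) (\<lambda>(i,j). if i = j then w i else 0)) $$ (j,l) =
      (\<Sum>i<d*q. (if i = tau d s j then 1 else 0) * (if i = l then w i else 0))"
      using jj l k by (simp add: adj_def scalar_prod_def atLeast0LessThan cnj_ind)
    also have "\<dots> = (if tau d s j = l then w l else 0)"
      using tl by (simp add: if_distrib[of "\<lambda>x. x * _"] sum.delta' cong: if_cong)
    finally show ?thesis .
  qed
  have "?L $$ (j,j') = (\<Sum>l<d*q. (if tau d s j = l then w l else 0) * (if l = tau d s j' then 1 else 0))"
    using jj k A by (simp add: adj_def scalar_prod_def atLeast0LessThan)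
  also have "\<dots> = (if tau d s j = tau d s j' then w (tau d s j) else 0)"
  proof -
    have "\<And>l. (if tau d s j = l then w l else 0) * (if l = tau d s j' then 1 else 0)
       = (if l = tau d s j' then (if tau d s j = tau d s j' then w (tau d s j) else 0) else 0)"
      by auto
    then show ?thesis using tl by (simp only: sum.delta' lessThan_iff) simp
  qed
  also have "\<dots> = ?R $$ (j,j')" using jj tau_inj[OF assms(2,3) jj] by auto
  finally show "?L $$ (j,j') = ?R $$ (j,j')" .
qed

lemma permk_unitary:
  assumes s: "\<forall>i<q. s i < q" "inj_on s {..<q}"
  shows "permk F q s \<in> unitary_grp F q"
proof -
  let ?d = "fdim F"
  have d: "?d > 0" by (rule fdim_pos)
  have "adj (permk F q s) * 1\<^sub>m (?d*q) * permk F q s = 1\<^sub>m (?d*q)"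
    using conj_diag[OF s d, of "permk F q s" "\<lambda>_. 1"]
    by (simp add: permk_def one_mat_def)
  then have U: "adj (permk F q s) * permk F q s = 1\<^sub>m (?d*q)"
    by (simp add: permk_def adj_def)
  have FM: "F_mat F q (permk F q s)"
  proof -
    have "F = FH \<longrightarrow> (\<forall>i<q. \<forall>j<q.
         permk F q s $$ (2*i+1, 2*j+1) = cnj (permk F q s $$ (2*i, 2*j)) \<and>
         permk F q s $$ (2*i+1, 2*j) = - cnj (permk F q s $$ (2*i, 2*j+1)))"
    proof (intro impI allI)
      fix i j assume F: "F = FH" and ij: "i < q" "j < q"
      then have dd: "fdim F = 2" by (simp add: fdim_def)
      have t1: "tau 2 s (2*j+1) = 2 * s j + 1" "tau 2 s (2*j) = 2 * s j"
        by (simp_all add: tau_def)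
      show "permk F q s $$ (2*i+1, 2*j+1) = cnj (permk F q s $$ (2*i, 2*j)) \<and>
         permk F q s $$ (2*i+1, 2*j) = - cnj (permk F q s $$ (2*i, 2*j+1))"
        using ij unfolding permk_def dd by (simp add: t1 tau_def)
    qed
    moreover have "F = FR \<longrightarrow> (\<forall>i<q. \<forall>j<q. Im (permk F q s $$ (i,j)) = 0)"
      by (auto simp: permk_def fdim_def)
    moreover have "permk F q s \<in> carrier_mat (fdim F * q) (fdim F * q)" by (simp add: permk_def)
    ultimately show ?thesis unfolding F_mat_def by blast
  qed
  show ?thesis using U FM unfolding unitary_grp_def by auto
qed

lemma det_lb:
  assumes "m \<le> n"
  shows "det (leading_block m (mat n n (\<lambda>(j,j'). if j = j' then g j else 0))) = (\<Prod>j<m. g j)"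
proof -
  let ?B = "leading_block m (mat n n (\<lambda>(j,j'). if j = j' then g j else 0))"
  have B: "?B = mat m m (\<lambda>(j,j'). if j = j' then g j else 0)"
    using assms by (auto simp: leading_block_def)
  have "upper_triangular ?B" unfolding B upper_triangular_def by auto
  moreover have "?B \<in> carrier_mat m m" unfolding B by simp
  ultimately have "det ?B = prod_list (diag_mat ?B)" by (rule det_upper_triangular)
  also have "\<dots> = (\<Prod>j<m. g j)" unfolding prod_list_diag_prod B
    by (simp add: atLeast0LessThan)
  finally show ?thesis .
qed

lemma prod_div2: "(\<Prod>j<2*(r::nat). (g (j div 2)::real)) = (\<Prod>i<r. g i)^2"
proof (induction r)
  case 0 then show ?case by simp
next
  case (Suc r)
  have e: "2 * Suc r = Suc (Suc (2*r))" by simp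
  have "(\<Prod>j<2*Suc r. g (j div 2)) = (\<Prod>j<2*r. g (j div 2)) * g r * g r"
    unfolding e by (simp add: mult.assoc)
  then show ?case using Suc by (simp add: power2_eq_square algebra_simps)
qed

lemma f_permk:
  assumes s: "\<forall>i<q. s i < q" "inj_on s {..<q}" and a: "\<forall>i<q. a i > 0" and r: "r \<le> q"
  shows "f_F F q a r (permk F q s) = (\<Sum>i<r. ln (a (s i)))"
proof -
  let ?d = "fdim F"
  have d: "?d > 0" by (rule fdim_pos)
  have M: "adj (permk F q s) * diag_F F q a * permk F q s =
     mat (?d*q) (?d*q) (\<lambda>(j,j'). if j = j' then complex_of_real (a (s (j div ?d))) else 0)"
  proof -
    have "adj (permk F q s) * diag_F F q a * permk F q s =
     mat (?d*q) (?d*q) (\<lambda>(j,j'). if j = j' then complex_of_real (a (tau ?d s j div ?d)) else 0)"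
      using conj_diag[OF s d, of "permk F q s" "\<lambda>i. complex_of_real (a (i div ?d))"]
      by (simp add: permk_def diag_F_def)
    also have "\<dots> = mat (?d*q) (?d*q) (\<lambda>(j,j'). if j = j' then complex_of_real (a (s (j div ?d))) else 0)"
      using d by (intro eq_matI) (auto simp: tau_div)
    finally show ?thesis .
  qed
  have pos: "(\<Prod>i<r. a (s i)) > 0" using a s r by (intro prod_pos) auto
  have mi: "minor_F F r (adj (permk F q s) * diag_F F q a * permk F q s) = (\<Prod>i<r. a (s i))"
  proof (cases "F = FH")
    case True
    then have dd: "?d = 2" by (simp add: fdim_def)
    have le: "2*r \<le> ?d*q" using r dd by simp
    show ?thesis unfolding minor_F_def M using True det_lb[OF le] dd pos
      by (simp add: prod_div2[of "\<lambda>i. a (s i)"] flip: of_real_prod)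
  next
    case False
    then have dd: "?d = 1" by (simp add: fdim_def)
    have le: "r \<le> ?d*q" using r dd by simp
    show ?thesis unfolding minor_F_def M using False det_lb[OF le] dd
      by (simp flip: of_real_prod)
  qed
  have ap: "\<forall>i<r. a (s i) > 0" using a s r by auto
  show ?thesis unfolding f_F_def mi using ap by (subst ln_prod) auto
qed

definition swp :: "nat \<Rightarrow> nat \<Rightarrow> nat \<Rightarrow> nat" where
  "swp x y i = (if i = x then y else if i = y then x else i)"

lemma swp_ok: assumes "x < q" "y < q"
  shows "\<forall>i<q. swp x y i < q" "inj_on (swp x y) {..<q}"
  using assms by (auto simp: swp_def inj_on_def split: if_splits)

lemma sum_swp: "(\<Sum>i<r. (b::nat\<Rightarrow>real) (swp x y i)) = (\<Sum>i<r. b i) +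
   (b y - b x) * ((if x < r then 1 else 0) - (if y < r then 1 else 0))"
proof (cases "x = y")
  case True
  then have "\<And>i. swp x y i = i" by (simp add: swp_def)
  then show ?thesis using True by simp
next
  case False
  have "(\<Sum>i<r. b (swp x y i)) - (\<Sum>i<r. b i) = (\<Sum>i<r. b (swp x y i) - b i)"
    by (simp add: sum_subtractf)
  also have "\<dots> = (\<Sum>i<r. (if x = i then b y - b x else 0) + (if y = i then b x - b y else 0))"
    using False by (intro sum.cong) (auto simp: swp_def)
  also have "\<dots> = (if x < r then b y - b x else 0) + (if y < r then b x - b y else 0)"
    by (simp add: sum.distrib)
  finally show ?thesis by (simp add: algebra_simps)
qed

theorem lemma4p6:
  fixes F :: base_field and q :: nat and a :: "nat \<Rightarrow> real"
  assumes "q \<ge> 2"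
    and "\<forall>i<q. a i > 0"
    and "\<exists>i<q. \<exists>j<q. a i \<noteq> a j"
  shows "\<forall>c :: nat \<Rightarrow> real.
           (\<forall>k \<in> unitary_grp F q. c 0 + (\<Sum>r = 1..q-1. c r * f_F F q a r k) = 0)
           \<longrightarrow> (\<forall>r<q. c r = 0)"
proof (rule allI, rule impI)
  fix c :: "nat \<Rightarrow> real"
  assume H: "\<forall>k \<in> unitary_grp F q. c 0 + (\<Sum>r = 1..q-1. c r * f_F F q a r k) = 0"
  define b where "b i = ln (a i)" for i
  have G: "c 0 + (\<Sum>r = 1..q-1. c r * (\<Sum>i<r. b (s i))) = 0"
    if s: "\<forall>i<q. s i < q" "inj_on s {..<q}" for s
  proof -
    have "(\<Sum>r = 1..q-1. c r * f_F F q a r (permk F q s)) = (\<Sum>r = 1..q-1. c r * (\<Sum>i<r. b (s i)))"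
      using f_permk[OF s assms(2)] by (intro sum.cong) (auto simp: b_def)
    then show ?thesis using H permk_unitary[OF s] by metis
  qed
  define P where "P t = (\<Sum>r = 1..q-1. if r \<le> t then c r else 0)" for t
  have PE: "P x = P y" if xy: "x < q" "y < q" "a x \<noteq> a y" for x y
  proof -
    have g1: "c 0 + (\<Sum>r = 1..q-1. c r * (\<Sum>i<r. b (swp x y i))) = 0"
      using G swp_ok[OF xy(1,2)] by blast
    have g0: "c 0 + (\<Sum>r = 1..q-1. c r * (\<Sum>i<r. b i)) = 0"
      using G[of id] by simp
    have "(\<Sum>r = 1..q-1. c r * (\<Sum>i<r. b (swp x y i))) - (\<Sum>r = 1..q-1. c r * (\<Sum>i<r. b i))
       = (\<Sum>r = 1..q-1. (b y - b x) * ((if r \<le> y then c r else 0) - (if r \<le> x then c r else 0)))"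
      unfolding sum_subtractf[symmetric] by (intro sum.cong) (auto simp: sum_swp algebra_simps)
    also have "\<dots> = (b y - b x) * (P y - P x)"
      unfolding P_def by (simp only: sum_distrib_left[symmetric] sum_subtractf)
    finally have "(b y - b x) * (P y - P x) = 0" using g0 g1 by linarith
    moreover have "b y \<noteq> b x" using xy assms(2) by (simp add: b_def)
    ultimately show ?thesis by simp
  qed
  have P0: "P 0 = 0" unfolding P_def by (intro sum.neutral) auto
  obtain i j where ij: "i < q" "j < q" "a i \<noteq> a j" using assms(3) by blast
  have Pz: "P t = 0" if t: "t < q" for t
  proof (cases "a t = a 0")
    case False
    then show ?thesis using PE[OF t _ False] P0 assms(1) by simp
  next
    case True
    obtain z where z: "z < q" "a z \<noteq> a 0" using ij True
      by (metis)
    have "P t = P z" using PE[OF t z(1)] z True by simp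
    also have "\<dots> = P 0" using PE[OF z(1)] z assms(1) by simp
    finally show ?thesis using P0 by simp
  qed
  have cz: "c r = 0" if r: "1 \<le> r" "r < q" for r
  proof -
    have "P r - P (r - 1) = (\<Sum>r' = 1..q-1. if r' = r then c r' else 0)"
      unfolding P_def sum_subtractf[symmetric] by (intro sum.cong) auto
    also have "\<dots> = c r" using r by simp
    finally show ?thesis using Pz r by simp
  qed
  have "(\<Sum>r = 1..q-1. c r * (\<Sum>i<r. b (id i))) = 0"
    using cz by (intro sum.neutral) (auto)
  then have c0: "c 0 = 0" using G[of id] by simp
  show "\<forall>r<q. c r = 0" using cz c0 by (metis less_one not_less)
qed

end
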